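(* Let $\Omega$ be a domain in $\mathbb R^n$, $n\ge3$, and let $(f,\Gamma)$ satisfy the standing structural assumptions. Assume that $0<v\in USC(\Omega)$ is a viscosity sub-solution of $f(\lambda(-A^u))=1$ in $\Omega$. Then for all $x\in\Omega$, $$\mathrm{dist}(x,\partial\Omega)^{\frac{n-2}{2}}v(x)\le\alpha,$$ where $\alpha=\alpha(f)$ is the constant of the canonical solutions.
   Context: Let $n\ge3$. For a positive $C^2$ function $u$, its conformal Hessian is $A^u=-\frac{2}{n-2}u^{-\frac{n+2}{n-2}}\nabla^2u+\frac{2n}{(n-2)^2}u^{-\frac{2n}{n-2}}\nabla u\otimes\nabla u-\frac{2}{(n-2)^2}u^{-\frac{2n}{n-2}}|\nabla u|^2I$, and $\lambda(-A^u)$ is the vector of eigenvalues of $-A^u$. Let $\Gamma_n=\{\mu:\mu_i>0\ \forall i\}$. Standing structural assumptions on $(f,\Gamma)$: $\Gamma\subset\mathbb R^n$ is an open symmetric cone with vertex at the origin, $\Gamma+\Gamma_n\subset\Gamma$; $f\in C^0(\bar\Gamma)$ symmetric, $f>0$ in $\Gamma$, $f=0$ on $\partial\Gamma$, $f(\lambda+\mu)\ge f(\lambda)$ for $\lambda\in\Gamma,\mu\in\Gamma_n$, $f$ homogeneous of some positive degree. Viscosity sub-solution: $v\in USC(\Omega)$ (upper semicontinuous, values in $\mathbb R\cup\{-\infty\}$) such that for every $x_0\in\Omega$, $\varphi\in C^2(\Omega)$ with $(v-\varphi)(x_0)=0$, $v-\varphi\le0$ near $x_0$, one has $\lambda(-A^\varphi(x_0))\in\bar\Gamma$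 and $f(\lambda(-A^\varphi(x_0)))\ge1$. Canonical solutions: there is a unique constant $\alpha=\alpha(f)>0$ such that for all $R>0$, $x_0\in\mathbb R^n$ the functions $u^{(in)}_{R,x_0}(x)=\alpha\big(\frac{R}{R^2-|x-x_0|^2}\big)^{\frac{n-2}{2}}$ and $u^{(out)}_{R,x_0}(x)=\alpha\big(\frac{R}{|x-x_0|^2-R^2}\big)^{\frac{n-2}{2}}$ satisfy $f(\lambda(-A^{u}))=1$ in $B_R(x_0)$ and in $\mathbb R^n\setminus\bar B_R(x_0)$ respectively. *)

theory Defs
  imports "HOL-Analysis.Analysis"
begin

text \<open>Points of R^n are vectors real^'n; the dimension is n = CARD('n).\<close>

definition usc_on :: "('a::metric_space) set \<Rightarrow> ('a \<Rightarrow> real) \<Rightarrow> bool" where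
  "usc_on S v \<longleftrightarrow> (\<forall>x\<in>S. \<forall>c. v x < c \<longrightarrow>
      (\<exists>d>0. \<forall>y\<in>S. dist y x < d \<longrightarrow> v y < c))"

definition C2_with :: "(real^'n) set \<Rightarrow> (real^'n \<Rightarrow> real) \<Rightarrow> (real^'n \<Rightarrow> real^'n)
     \<Rightarrow> (real^'n \<Rightarrow> real^'n^'n) \<Rightarrow> bool" where
  "C2_with U u Du Hu \<longleftrightarrow>
     (\<forall>x\<in>U. (u has_derivative (\<lambda>h. Du x \<bullet> h)) (at x)) \<and>
     (\<forall>x\<in>U. (Du has_derivative (\<lambda>h. Hu x *v h)) (at x)) \<and>
     continuous_on U Du \<and> continuous_on U Hu"

definition outer :: "real^'n \<Rightarrow> real^'n \<Rightarrow> real^'n^'n" where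
  "outer a b = (\<chi> i j. a$i * b$j)"

text \<open>Conformal Hessian A^u at a point, given u(x) = p > 0, gradient g, Hessian H.\<close>
definition conf_hess :: "real \<Rightarrow> real^'n \<Rightarrow> real^'n^'n \<Rightarrow> real^'n^'n" where
  "conf_hess p g H = (let n = real CARD('n) in
      (- (2 / (n - 2)) * p powr (- (n + 2) / (n - 2))) *\<^sub>R H
    + ((2 * n / (n - 2)^2) * p powr (- 2 * n / (n - 2))) *\<^sub>R outer g g
    - ((2 / (n - 2)^2) * p powr (- 2 * n / (n - 2)) * (norm g)^2) *\<^sub>R mat 1)"

text \<open>lam is a vector of the eigenvalues of M, counted with (algebraic) multiplicity,
  i.e. det(t I - M) = prod_i (t - lam_i).  For symmetric M this is lambda(M) up to order.\<close>
definition eigvec_of :: "real^'n^'n \<Rightarrow> real^'n \<Rightarrow> bool" where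
  "eigvec_of M lam \<longleftrightarrow> (\<forall>t. det (mat t - M) = (\<Prod>i\<in>UNIV. t - lam$i))"

definition pos_cone :: "(real^'n) set" where
  "pos_cone = {mu. \<forall>i. mu$i > 0}"

definition permute_vec :: "('n \<Rightarrow> 'n) \<Rightarrow> real^'n \<Rightarrow> real^'n" where
  "permute_vec s x = (\<chi> i. x $ (s i))"

definition structural :: "(real^'n \<Rightarrow> real) \<Rightarrow> (real^'n) set \<Rightarrow> bool" where
  "structural f G \<longleftrightarrow>
     G \<noteq> {} \<and> open G \<and> (\<forall>t>0. \<forall>x\<in>G. t *\<^sub>R x \<in> G) \<and>
     (\<forall>s x. s permutes (UNIV::'n set) \<longrightarrow> x \<in> G \<longrightarrow> permute_vec s x \<in> G) \<and>
     (\<forall>x\<in>G. \<forall>mu\<in>pos_cone. x + mu \<in> G) \<and>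
     continuous_on (closure G) f \<and>
     (\<forall>s x. s permutes (UNIV::'n set) \<longrightarrow> x \<in> closure G \<longrightarrow> f (permute_vec s x) = f x) \<and>
     (\<forall>x\<in>G. f x > 0) \<and> (\<forall>x\<in>frontier G. f x = 0) \<and>
     (\<forall>x\<in>G. \<forall>mu\<in>pos_cone. f (x + mu) \<ge> f x) \<and>
     (\<exists>d>0. \<forall>x\<in>G. \<forall>t>0. f (t *\<^sub>R x) = t powr d * f x)"

definition classical_solution :: "(real^'n \<Rightarrow> real) \<Rightarrow> (real^'n) set \<Rightarrow> (real^'n) set
     \<Rightarrow> (real^'n \<Rightarrow> real) \<Rightarrow> bool" where
  "classical_solution f G U u \<longleftrightarrow> (\<forall>x\<in>U. u x > 0) \<and>
     (\<exists>Du Hu. C2_with U u Du Hu \<and>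
        (\<forall>x\<in>U. \<forall>lam. eigvec_of (- conf_hess (u x) (Du x) (Hu x)) lam
                 \<longrightarrow> lam \<in> closure G \<and> f lam = 1))"

definition visc_subsol :: "(real^'n \<Rightarrow> real) \<Rightarrow> (real^'n) set \<Rightarrow> (real^'n) set
     \<Rightarrow> (real^'n \<Rightarrow> real) \<Rightarrow> bool" where
  "visc_subsol f G \<Omega> v \<longleftrightarrow> usc_on \<Omega> v \<and>
     (\<forall>x0\<in>\<Omega>. \<forall>phi Dphi Hphi. C2_with \<Omega> phi Dphi Hphi \<longrightarrow> v x0 = phi x0 \<longrightarrow>
        (\<exists>r>0. \<forall>y\<in>\<Omega>. dist y x0 < r \<longrightarrow> v y \<le> phi y) \<longrightarrow>
        (\<forall>lam. eigvec_of (- conf_hess (phi x0) (Dphi x0) (Hphi x0)) lam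
                 \<longrightarrow> lam \<in> closure G \<and> f lam \<ge> 1))"

definition u_in :: "real \<Rightarrow> real \<Rightarrow> real^'n \<Rightarrow> real^'n \<Rightarrow> real" where
  "u_in a R x0 x = a * (R / (R^2 - (norm (x - x0))^2)) powr ((real CARD('n) - 2) / 2)"

definition u_out :: "real \<Rightarrow> real \<Rightarrow> real^'n \<Rightarrow> real^'n \<Rightarrow> real" where
  "u_out a R x0 x = a * (R / ((norm (x - x0))^2 - R^2)) powr ((real CARD('n) - 2) / 2)"

definition canonical_const :: "(real^'n \<Rightarrow> real) \<Rightarrow> (real^'n) set \<Rightarrow> real \<Rightarrow> bool" where
  "canonical_const f G a \<longleftrightarrow> a > 0 \<and>
     (\<forall>R>0. \<forall>x0::real^'n.
        classical_solution f G (ball x0 R) (u_in a R x0) \<and>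
        classical_solution f G (- cball x0 R) (u_out a R x0))"

end

theory Submission
  imports Defs
begin

lemma deriv_glue:
  fixes f g :: "real \<Rightarrow> real"
  assumes f: "(f has_field_derivative D) (at x within {..x})"
    and g: "(g has_field_derivative D) (at x within {x..})"
    and fg: "f x = g x"
  shows "((\<lambda>t. if t \<le> x then f t else g t) has_field_derivative D) (at x)"
proof -
  let ?h = "\<lambda>t. if t \<le> x then f t else g t"
  have 1: "((\<lambda>y. (?h y - ?h x)/(y - x)) \<longlongrightarrow> D) (at x within {..x})"
    using f unfolding has_field_derivative_iff
    by (rule Lim_transform_within[where d=1]) auto
  have 2: "((\<lambda>y. (?h y - ?h x)/(y - x)) \<longlongrightarrow> D) (at x within {x..})"
    using g unfolding has_field_derivative_iff
    by (rule Lim_transform_within[where d=1]) (auto simp: fg)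
  have "((\<lambda>y. (?h y - ?h x)/(y - x)) \<longlongrightarrow> D) (at x within ({..x} \<union> {x..}))"
    using 1 2 by (simp add: Lim_within_Un)
  moreover have "{..x} \<union> {x..} = (UNIV::real set)" by auto
  ultimately show ?thesis unfolding has_field_derivative_iff by simp
qed

lemma outer_mult: "outer a b *v h = (b \<bullet> h) *\<^sub>R a"
  by (simp add: outer_def matrix_vector_mult_def vec_eq_iff inner_vec_def sum_distrib_left mult.commute mult.left_commute)

lemma scaleR_mat_vec: "(c *\<^sub>R A) *v h = c *\<^sub>R (A *v (h::real^'n)) " for A :: "real^'n^'m"
  by (simp add: matrix_vector_mult_def vec_eq_iff sum_distrib_left mult.assoc)

lemma continuous_on_outer[continuous_intros]:
  assumes "continuous_on S a" "continuous_on S b"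
  shows "continuous_on S (\<lambda>y. outer (a y) (b y))"
  unfolding outer_def
  by (intro continuous_intros continuous_on_vec_lambda continuous_on_mult continuous_on_component assms)

lemma radial_C2:
  fixes x :: "real^'n" and G G1 G2 :: "real \<Rightarrow> real"
  assumes d1: "\<And>t. (G has_real_derivative G1 t) (at t)"
    and d2: "\<And>t. (G1 has_real_derivative G2 t) (at t)"
    and c2: "continuous_on UNIV G2"
  shows "C2_with U (\<lambda>y. G (norm (y-x)^2)) (\<lambda>y. (2 * G1 (norm(y-x)^2)) *\<^sub>R (y-x))
     (\<lambda>y. (4 * G2 (norm(y-x)^2)) *\<^sub>R outer (y-x) (y-x) + (2*G1(norm(y-x)^2)) *\<^sub>R mat 1)"
proof -
  have nd: "((\<lambda>y. norm (y-x)^2) has_derivative (\<lambda>h. 2 * ((y-x) \<bullet> h))) (at y)" for y :: "real^'n"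
  proof -
    have "((\<lambda>y. (y-x) \<bullet> (y-x)) has_derivative (\<lambda>h. (y-x) \<bullet> h + h \<bullet> (y-x))) (at y)"
      by (auto intro!: derivative_eq_intros)
    then show ?thesis by (simp add: power2_norm_eq_inner inner_commute)
  qed
  have c1: "continuous_on UNIV G1"
    using d2 by (meson DERIV_continuous continuous_at_imp_continuous_on)
  have D1: "((\<lambda>y. G (norm (y-x)^2)) has_derivative (\<lambda>h. ((2 * G1 (norm(y-x)^2)) *\<^sub>R (y-x)) \<bullet> h)) (at y)" for y
  proof -
    have "((\<lambda>y. G (norm (y-x)^2)) has_derivative (\<lambda>h. G1 (norm(y-x)^2) * (2 * ((y-x) \<bullet> h)))) (at y)"
      using has_derivative_compose[OF nd d1[unfolded has_field_derivative_def]] by (simp add: o_def)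
    then show ?thesis by (simp add: algebra_simps)
  qed
  have D2: "((\<lambda>y. (2 * G1 (norm(y-x)^2)) *\<^sub>R (y-x)) has_derivative
     (\<lambda>h. ((4 * G2 (norm(y-x)^2)) *\<^sub>R outer (y-x) (y-x) + (2*G1(norm(y-x)^2)) *\<^sub>R mat 1) *v h)) (at y)" for y
  proof -
    have g1: "((\<lambda>y. G1 (norm (y-x)^2)) has_derivative (\<lambda>h. G2 (norm(y-x)^2) * (2 * ((y-x) \<bullet> h)))) (at y)"
      using has_derivative_compose[OF nd d2[unfolded has_field_derivative_def]] by (simp add: o_def)
    have "((\<lambda>y. (2 * G1 (norm(y-x)^2)) *\<^sub>R (y-x)) has_derivative
       (\<lambda>h. (2 * G1 (norm(y-x)^2)) *\<^sub>R h + (2 * (G2 (norm(y-x)^2) * (2 * ((y-x) \<bullet> h)))) *\<^sub>R (y-x))) (at y)"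
      by (auto intro!: derivative_eq_intros g1)
    moreover have "(\<lambda>h. ((4 * G2 (norm(y-x)^2)) *\<^sub>R outer (y-x) (y-x) + (2*G1(norm(y-x)^2)) *\<^sub>R mat 1) *v h)
      = (\<lambda>h. (2 * G1 (norm(y-x)^2)) *\<^sub>R h + (2 * (G2 (norm(y-x)^2) * (2 * ((y-x) \<bullet> h)))) *\<^sub>R (y-x))"
      by (rule ext) (simp add: matrix_vector_mult_add_rdistrib outer_mult scaleR_mat_vec)
    ultimately show ?thesis by simp
  qed
  show ?thesis unfolding C2_with_def
  proof (intro conjI ballI)
    fix y assume "y \<in> U" show "((\<lambda>y. G (norm (y-x)^2)) has_derivative (\<lambda>h. ((2 * G1 (norm(y-x)^2)) *\<^sub>R (y-x)) \<bullet> h)) (at y)"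
      by (rule D1)
  next
    fix y assume "y \<in> U" show "((\<lambda>y. (2 * G1 (norm(y-x)^2)) *\<^sub>R (y-x)) has_derivative
     (\<lambda>h. ((4 * G2 (norm(y-x)^2)) *\<^sub>R outer (y-x) (y-x) + (2*G1(norm(y-x)^2)) *\<^sub>R mat 1) *v h)) (at y)"
      by (rule D2)
  qed (auto intro!: continuous_intros continuous_on_compose2[OF c1] continuous_on_compose2[OF c2])
qed

lemma glue_C2:
  fixes Gi G1i G2i :: "real \<Rightarrow> real"
  assumes tb: "t1 < b"
    and d1: "\<And>t. t < b \<Longrightarrow> (Gi has_real_derivative G1i t) (at t)"
    and d2: "\<And>t. t < b \<Longrightarrow> (G1i has_real_derivative G2i t) (at t)"
    and c2: "continuous_on {..<b} G2i"
  defines "G \<equiv> \<lambda>t. if t \<le> t1 then Gi t else Gi t1 + G1i t1 * (t - t1) + G2i t1 / 2 * (t - t1)^2"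
    and "G1 \<equiv> \<lambda>t. if t \<le> t1 then G1i t else G1i t1 + G2i t1 * (t - t1)"
    and "G2 \<equiv> \<lambda>t. if t \<le> t1 then G2i t else G2i t1"
  shows "(G has_real_derivative G1 t) (at t)" "(G1 has_real_derivative G2 t) (at t)"
    "continuous_on UNIV G2"
proof -
  have pd1: "((\<lambda>t. Gi t1 + G1i t1 * (t - t1) + G2i t1 / 2 * (t - t1)^2) has_real_derivative
      G1i t1 + G2i t1 * (t - t1)) (at t)" for t
    by (auto intro!: derivative_eq_intros simp: field_simps)
  have pd2: "((\<lambda>t. G1i t1 + G2i t1 * (t - t1)) has_real_derivative G2i t1) (at t)" for t
    by (auto intro!: derivative_eq_intros)
  show "(G has_real_derivative G1 t) (at t)"
  proof (cases "t < t1")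
    case True
    have "(Gi has_real_derivative G1i t) (at t)" using d1 True tb by auto
    then have "(G has_real_derivative G1i t) (at t)" unfolding has_field_derivative_def
      by (rule has_derivative_transform_within_open[where s="{..<t1}"]) (use True in \<open>auto simp: G_def G1_def\<close>)
    then show ?thesis using True by (simp add: G1_def)
  next
    case False
    show ?thesis
    proof (cases "t = t1")
      case True
      have "G = (\<lambda>t. if t \<le> t1 then Gi t else Gi t1 + G1i t1 * (t - t1) + G2i t1 / 2 * (t - t1)^2)"
        by (simp add: G_def)
      moreover have "((\<lambda>t. if t \<le> t1 then Gi t else Gi t1 + G1i t1 * (t - t1) + G2i t1 / 2 * (t - t1)^2)
          has_real_derivative G1i t1) (at t1)"
        apply (rule deriv_glue)
        using has_field_derivative_at_within[OF d1[OF tb]] has_field_derivative_at_within[OF pd1[of t1]]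
        by auto
      ultimately show ?thesis using True by (simp add: G1_def)
    next
      case False2: False
      with False have gt: "t > t1" by auto
      have "(G has_real_derivative G1i t1 + G2i t1 * (t - t1)) (at t)" using pd1[of t] unfolding has_field_derivative_def
        by (rule has_derivative_transform_within_open[where s="{t1<..}"]) (use gt in \<open>auto simp: G_def G1_def\<close>)
      then show ?thesis using gt by (simp add: G1_def)
    qed
  qed
  show "(G1 has_real_derivative G2 t) (at t)"
  proof (cases "t < t1")
    case True
    have "(G1i has_real_derivative G2i t) (at t)" using d2 True tb by auto
    then have "(G1 has_real_derivative G2i t) (at t)" unfolding has_field_derivative_def
      by (rule has_derivative_transform_within_open[where s="{..<t1}"]) (use True in \<open>auto simp: G1_def G2_def\<close>)
    then show ?thesis using True by (simp add: G2_def)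
  next
    case False
    show ?thesis
    proof (cases "t = t1")
      case True
      have "G1 = (\<lambda>t. if t \<le> t1 then G1i t else G1i t1 + G2i t1 * (t - t1))"
        by (simp add: G1_def)
      moreover have "((\<lambda>t. if t \<le> t1 then G1i t else G1i t1 + G2i t1 * (t - t1))
          has_real_derivative G2i t1) (at t1)"
        apply (rule deriv_glue)
        using has_field_derivative_at_within[OF d2[OF tb]] has_field_derivative_at_within[OF pd2[of t1]]
        by auto
      ultimately show ?thesis using True by (simp add: G2_def)
    next
      case False2: False
      with False have gt: "t > t1" by auto
      have "(G1 has_real_derivative G2i t1) (at t)" using pd2[of t] unfolding has_field_derivative_def
        by (rule has_derivative_transform_within_open[where s="{t1<..}"]) (use gt in \<open>auto simp: G1_def G2_def\<close>)
      then show ?thesis using gt by (simp add: G2_def)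
    qed
  qed
  have "G2 = (\<lambda>t. G2i (min t t1))"
    by (auto simp: G2_def min_def)
  moreover have "continuous_on UNIV (\<lambda>t. G2i (min t t1))"
    apply (rule continuous_on_compose2[OF c2])
    using tb by (auto intro!: continuous_intros)
  ultimately show "continuous_on UNIV G2" by simp
qed

lemma conf_hess_radial:
  fixes z :: "real^'n"
  assumes n3: "CARD('n) \<ge> 3" and p: "p > 0" and q: "q > 0"
  defines "k \<equiv> (real CARD('n) - 2) / 2"
  shows "conf_hess p ((2 * (k * p / q)) *\<^sub>R z)
     ((4 * (k * (k+1) * p / q^2)) *\<^sub>R outer z z + (2 * (k * p / q)) *\<^sub>R mat 1)
   = (- 2 * p powr (- 2 / k) * (q + (norm z)^2) / q^2) *\<^sub>R mat 1"
proof -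
  define n where "n = real CARD('n)"
  define P where "P = p powr (- 2 / k)"
  have k0: "k > 0" using n3 unfolding k_def by auto
  have nk: "n = 2*k + 2" unfolding n_def k_def by (simp add: field_simps)
  have e1: "p powr (- (n + 2) / (n - 2)) = P / p"
  proof -
    have "- (n + 2) / (n - 2) = - 2 / k - 1" using k0 by (simp add: nk field_simps)
    then show ?thesis using p by (simp add: P_def powr_diff)
  qed
  have e2: "p powr (- 2 * n / (n - 2)) = P / p^2"
  proof -
    have "- 2 * n / (n - 2) = - 2 / k - 2" using k0 by (simp add: nk field_simps)
    then show ?thesis using p by (simp add: P_def powr_diff)
  qed
  have nn: "(norm ((2 * (k * p / q)) *\<^sub>R z))^2 = (2 * (k * p / q))^2 * (norm z)^2"
    by (simp add: power_mult_distrib power_divide power2_abs)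
  show ?thesis
    unfolding conf_hess_def Let_def n_def[symmetric] e1 e2 nn P_def[symmetric]
    using k0 p q
    by (simp add: vec_eq_iff outer_def mat_def nk field_simps power2_eq_square)
qed

lemma usc_cover:
  fixes h :: "'a::metric_space \<Rightarrow> real"
  assumes K: "compact K" "K \<noteq> {}" and u: "usc_on K h"
    and c: "\<And>y. y \<in> K \<Longrightarrow> h y < c y"
  shows "\<exists>y\<in>K. \<forall>z\<in>K. h z < c y"
proof -
  have "\<forall>y\<in>K. \<exists>d>0. \<forall>z\<in>K. dist z y < d \<longrightarrow> h z < c y"
    using u c unfolding usc_on_def by blast
  then obtain d where d: "\<And>y. y \<in> K \<Longrightarrow> d y > 0 \<and> (\<forall>z\<in>K. dist z y < d y \<longrightarrow> h z < c y)"
    by metis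
  have "K \<subseteq> (\<Union>y\<in>K. ball y (d y))" using d by force
  then obtain F where F: "F \<subseteq> K" "finite F" "K \<subseteq> (\<Union>y\<in>F. ball y (d y))"
    using compactE_image[OF K(1), of K "\<lambda>y. ball y (d y)"] by auto
  have Fne: "F \<noteq> {}" using F K(2) by auto
  have "Max (c ` F) \<in> c ` F" using F(2) Fne by (intro Max_in) auto
  then obtain y0 where y0F: "y0 \<in> F" and y0m: "c y0 = Max (c ` F)" by auto
  have y0: "y0 \<in> F" "\<And>y. y \<in> F \<Longrightarrow> c y \<le> c y0"
    using y0F y0m F(2) by auto
  have "\<forall>z\<in>K. h z < c y0"
  proof
    fix z assume z: "z \<in> K"
    then obtain y where y: "y \<in> F" "z \<in> ball y (d y)" using F by auto
    then have "h z < c y" using d[of y] F z by (auto simp: dist_commute)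
    then show "h z < c y0" using y0(2)[OF y(1)] by linarith
  qed
  then show ?thesis using y0 F by auto
qed

lemma usc_max:
  fixes h :: "'a::metric_space \<Rightarrow> real"
  assumes K: "compact K" "K \<noteq> {}" and u: "usc_on K h"
  shows "\<exists>y\<in>K. \<forall>z\<in>K. h z \<le> h y"
proof -
  obtain y1 where y1: "y1 \<in> K" "\<forall>z\<in>K. h z < h y1 + 1"
    using usc_cover[OF K u, of "\<lambda>y. h y + 1"] by auto
  have bdd: "bdd_above (h ` K)"
    unfolding bdd_above_def using y1(2) less_imp_le by blast
  define s where "s = Sup (h ` K)"
  have le: "h y \<le> s" if "y \<in> K" for y
    unfolding s_def using bdd that by (simp add: cSUP_upper)
  show ?thesis
  proof (rule ccontr)
    assume nt: "\<not> ?thesis"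
    have lt: "h y < s" if "y \<in> K" for y
    proof -
      have "h y \<noteq> s"
      proof
        assume "h y = s"
        then have "\<forall>z\<in>K. h z \<le> h y" using le by auto
        then show False using nt that by blast
      qed
      then show ?thesis using le[OF that] by linarith
    qed
    have "\<exists>y\<in>K. \<forall>z\<in>K. h z < (h y + s) / 2"
      by (rule usc_cover[OF K u]) (use lt in simp)
    then obtain y where y: "y \<in> K" and yz: "\<forall>z\<in>K. h z < (h y + s) / 2"
      by blast
    have "Sup (h ` K) \<le> (h y + s) / 2"
      by (rule cSUP_least) (use K(2) yz in \<open>auto intro: less_imp_le\<close>)
    then have "s \<le> (h y + s) / 2" unfolding s_def .
    with lt[OF y] show False by (simp add: field_simps)
  qed
qed

lemma powr_deriv_aux:
  fixes r2 C e :: real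
  assumes "t < r2"
  shows "((\<lambda>t. C * (r2 - t) powr e) has_real_derivative (- e * C * (r2 - t) powr (e - 1))) (at t)"
  using assms by (auto intro!: derivative_eq_intros simp: algebra_simps)

lemma C2_with_subset: "C2_with U u Du Hu \<Longrightarrow> V \<subseteq> U \<Longrightarrow> C2_with V u Du Hu"
  unfolding C2_with_def by (auto intro: continuous_on_subset)

lemma u_in_eq:
  fixes x y :: "real^'n"
  assumes "r > 0" "norm (y - x)^2 < r^2"
  shows "u_in al r x y = al * r powr ((real CARD('n) - 2) / 2) * (r^2 - norm (y - x)^2) powr (- ((real CARD('n) - 2) / 2))"
  using assms unfolding u_in_def by (simp add: powr_divide powr_minus_divide)

lemma ext_fun:
  fixes x :: "real^'n"
  assumes n3: "CARD('n) \<ge> 3" and r: "r > 0" and c: "c > 0" and al: "al > 0" and t1: "t1 < r^2"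
  defines "k \<equiv> (real CARD('n) - 2) / 2"
  shows "\<exists>\<phi> D\<phi> H\<phi>. C2_with UNIV \<phi> D\<phi> H\<phi> \<and>
     (\<forall>y. norm (y - x)^2 < t1 \<longrightarrow> \<phi> y = c * u_in al r x y) \<and>
     (\<forall>y. norm (y - x)^2 < t1 \<longrightarrow> conf_hess (\<phi> y) (D\<phi> y) (H\<phi> y) =
        (- 2 * (\<phi> y) powr (- 2 / k) * r^2 / (r^2 - norm (y - x)^2)^2) *\<^sub>R mat 1)"
proof -
  have k0: "k > 0" using n3 unfolding k_def by auto
  define a where "a = c * al * r powr k"
  have a0: "a > 0" using c al r by (simp add: a_def)
  define Gi where "Gi = (\<lambda>t. a * (r^2 - t) powr (- k))"
  define G1i where "G1i = (\<lambda>t. k * a * (r^2 - t) powr (- k - 1))"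
  define G2i where "G2i = (\<lambda>t. k * (k + 1) * a * (r^2 - t) powr (- k - 2))"
  have d1: "(Gi has_real_derivative G1i t) (at t)" if "t < r^2" for t
    using powr_deriv_aux[OF that, of a "-k"] unfolding Gi_def G1i_def by (simp add: algebra_simps)
  have d2: "(G1i has_real_derivative G2i t) (at t)" if "t < r^2" for t
    using powr_deriv_aux[OF that, of "k * a" "-k-1"] unfolding G1i_def G2i_def by (simp add: algebra_simps)
  have c2: "continuous_on {..<r^2} G2i"
    unfolding G2i_def by (auto intro!: continuous_intros)
  define G where "G \<equiv> \<lambda>t. if t \<le> t1 then Gi t else Gi t1 + G1i t1 * (t - t1) + G2i t1 / 2 * (t - t1)^2"
  define G1 where "G1 \<equiv> \<lambda>t. if t \<le> t1 then G1i t else G1i t1 + G2i t1 * (t - t1)"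
  define G2 where "G2 \<equiv> \<lambda>t. if t \<le> t1 then G2i t else G2i t1"
  note gl = glue_C2[OF t1 d1 d2 c2, folded G_def G1_def G2_def]
  define \<phi> where "\<phi> = (\<lambda>y::real^'n. G (norm (y-x)^2))"
  define D\<phi> where "D\<phi> = (\<lambda>y::real^'n. (2 * G1 (norm(y-x)^2)) *\<^sub>R (y-x))"
  define H\<phi> where "H\<phi> = (\<lambda>y::real^'n. (4 * G2 (norm(y-x)^2)) *\<^sub>R outer (y-x) (y-x) + (2*G1(norm(y-x)^2)) *\<^sub>R mat 1)"
  have C2: "C2_with UNIV \<phi> D\<phi> H\<phi>"
    unfolding \<phi>_def D\<phi>_def H\<phi>_def by (rule radial_C2) (use gl in \<open>simp_all add: G1_def G2_def\<close>)
  have eq: "\<phi> y = c * u_in al r x y" if "norm (y - x)^2 < t1" for y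
  proof -
    have "norm (y - x)^2 < r^2" using that t1 by linarith
    then show ?thesis using that r
      by (simp add: \<phi>_def G_def Gi_def a_def u_in_eq k_def[symmetric])
  qed
  have ch: "conf_hess (\<phi> y) (D\<phi> y) (H\<phi> y) =
        (- 2 * (\<phi> y) powr (- 2 / k) * r^2 / (r^2 - norm (y - x)^2)^2) *\<^sub>R mat 1"
    if y: "norm (y - x)^2 < t1" for y
  proof -
    define t where "t = norm (y - x)^2"
    define q where "q = r^2 - t"
    have q0: "q > 0" using y t1 by (simp add: q_def t_def)
    have tt: "t \<le> t1" using y by (simp add: t_def)
    define p where "p = Gi t"
    have p0: "p > 0" using q0 a0 by (simp add: p_def Gi_def q_def)
    have e1: "G1 t = k * p / q"
      using tt q0 by (simp add: G1_def G1i_def p_def Gi_def q_def[symmetric] powr_diff)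
    have e2: "G2 t = k * (k + 1) * p / q^2"
    proof -
      have "q powr (- k - 2) = q powr (- k) / q^2"
        using q0 by (simp add: powr_diff powr_numeral)
      then show ?thesis using tt q0 by (simp add: G2_def G2i_def p_def Gi_def q_def[symmetric])
    qed
    have ep: "\<phi> y = p" using tt by (simp add: \<phi>_def G_def p_def t_def)
    have "conf_hess (\<phi> y) (D\<phi> y) (H\<phi> y) = conf_hess p ((2 * (k * p / q)) *\<^sub>R (y - x))
     ((4 * (k * (k+1) * p / q^2)) *\<^sub>R outer (y - x) (y - x) + (2 * (k * p / q)) *\<^sub>R mat 1)"
      by (simp add: ep D\<phi>_def H\<phi>_def t_def[symmetric] e1 e2)
    also have "\<dots> = (- 2 * p powr (- 2 / k) * (q + (norm (y - x))^2) / q^2) *\<^sub>R mat 1"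
      using conf_hess_radial[OF n3 p0 q0, of "y - x"] by (simp add: k_def)
    also have "q + (norm (y - x))^2 = r^2" by (simp add: q_def t_def)
    finally show ?thesis by (simp add: ep q_def t_def)
  qed
  show ?thesis using C2 eq ch by blast
qed

lemma usc_on_subset: "usc_on S v \<Longrightarrow> T \<subseteq> S \<Longrightarrow> usc_on T v"
  unfolding usc_on_def by (meson subsetD)

lemma usc_h:
  fixes x :: "real^'n" and u v :: "real^'n \<Rightarrow> real"
  assumes r: "r > 0" and k: "k > 0" and a: "a > 0" and M: "M > 0"
    and uv: "usc_on (cball x r) v" and vM: "\<And>z. z \<in> cball x r \<Longrightarrow> v z \<le> M"
    and vpos: "\<And>z. z \<in> cball x r \<Longrightarrow> v z > 0"
    and upos: "\<And>y. y \<in> ball x r \<Longrightarrow> u y > 0"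
    and ucont: "\<And>y. y \<in> ball x r \<Longrightarrow> isCont u y"
    and ueq: "\<And>y. y \<in> ball x r \<Longrightarrow> u y = a * (r^2 - norm (y - x)^2) powr (- k)"
  shows "usc_on (cball x r) (\<lambda>y. if y \<in> ball x r then v y / u y else 0)"
  unfolding usc_on_def
proof (intro ballI allI impI)
  fix y c
  assume y: "y \<in> cball x r" and hc: "(if y \<in> ball x r then v y / u y else 0) < c"
  define h where "h = (\<lambda>y. if y \<in> ball x r then v y / u y else 0)"
  show "\<exists>d>0. \<forall>z\<in>cball x r. dist z y < d \<longrightarrow> (if z \<in> ball x r then v z / u z else 0) < c"
  proof (cases "y \<in> ball x r")
    case True
    have uy: "u y > 0" using upos True by auto
    have vy: "v y > 0" using vpos y by auto
    have hy: "v y / u y < c" using hc True by simp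
    then have vc: "v y < c * u y" using uy by (simp add: divide_less_eq)
    have c0: "c > 0" using vy uy hy by (meson divide_pos_pos less_trans)
    define c' where "c' = (v y + c * u y) / 2"
    have c'1: "v y < c'" "c' < c * u y" using vc by (auto simp: c'_def)
    obtain d1 where d1: "d1 > 0" "\<forall>z\<in>cball x r. dist z y < d1 \<longrightarrow> v z < c'"
      using uv y c'1(1) unfolding usc_on_def by blast
    have e0: "(c * u y - c') / c > 0" using c'1 c0 by auto
    obtain d2 where d2: "d2 > 0" "\<forall>z. dist z y < d2 \<longrightarrow> dist (u z) (u y) < (c * u y - c') / c"
      using ucont[OF True] e0 unfolding continuous_at_eps_delta by blast
    define d3 where "d3 = r - dist x y"
    have d3: "d3 > 0" using True by (simp add: d3_def)
    show ?thesis
    proof (intro exI[of _ "min d1 (min d2 d3)"] conjI ballI impI)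
      show "min d1 (min d2 d3) > 0" using d1 d2 d3 by simp
      fix z assume z: "z \<in> cball x r" and dz: "dist z y < min d1 (min d2 d3)"
      have zb: "z \<in> ball x r"
        using dz dist_triangle[of x z y] by (simp add: d3_def dist_commute)
      have "v z < c'" using d1 z dz by auto
      moreover have "dist (u z) (u y) < (c * u y - c') / c" using d2 dz by auto
      then have "u z > u y - (c * u y - c') / c" by (simp add: dist_real_def abs_less_iff)
      then have "c * u z > c * (u y - (c * u y - c') / c)" using c0 by simp
      then have "c * u z > c'" using c0 by (simp add: field_simps)
      ultimately have "v z < c * u z" by linarith
      then show "(if z \<in> ball x r then v z / u z else 0) < c"
        using zb upos[OF zb] by (simp add: divide_less_eq mult.commute)
    qed
  next
    case False
    have c0: "c > 0" using hc False by simp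
    have ny: "norm (y - x) = r" using y False by (simp add: dist_norm norm_minus_commute)
    define w where "w = (a * c / (2 * M)) powr (1 / k)"
    have w0: "w > 0" using a c0 M by (simp add: w_def)
    have ww: "w powr (- k) = 2 * M / (a * c)"
    proof -
      have "w powr (- k) = (a * c / (2 * M)) powr (1 / k * - k)"
        unfolding w_def by (simp add: powr_powr)
      also have "1 / k * - k = -1" using k by simp
      finally show ?thesis using a c0 M by (simp add: powr_minus_divide)
    qed
    define d where "d = w / (2 * r)"
    have d0: "d > 0" using w0 r by (simp add: d_def)
    show ?thesis
    proof (intro exI[of _ d] conjI ballI impI)
      show "d > 0" by (rule d0)
      fix z assume z: "z \<in> cball x r" and dz: "dist z y < d"
      show "(if z \<in> ball x r then v z / u z else 0) < c"
      proof (cases "z \<in> ball x r")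
        case False then show ?thesis using c0 by simp
      next
        case zb: True
        define s where "s = norm (z - x)"
        have s: "s < r" "0 \<le> s" using zb by (auto simp: s_def dist_norm norm_minus_commute)
        have "r \<le> norm (y - z) + s" unfolding s_def using ny norm_triangle_ineq[of "y - z" "z - x"] by simp
        then have rs: "r - s < d" using dz by (simp add: dist_norm norm_minus_commute)
        have "r^2 - s^2 = (r - s) * (r + s)" by (simp add: algebra_simps power2_eq_square)
        also have "\<dots> < d * (r + s)" using rs s by (intro mult_strict_right_mono) auto
        also have "\<dots> \<le> d * (2 * r)" using s d0 by (intro mult_left_mono) auto
        also have "\<dots> = w" using r by (simp add: d_def)
        finally have qw: "r^2 - s^2 < w" .
        have q0: "r^2 - s^2 > 0" using s by (simp add: power_strict_mono)
        have "w powr (- k) < (r^2 - s^2) powr (- k)"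
          using powr_less_mono2_neg[of "-k" "r^2 - s^2" w] k q0 qw by simp
        then have "a * w powr (- k) < a * (r^2 - s^2) powr (- k)" using a by simp
        moreover have "a * (2 * M / (a * c)) = 2 * M / c" using a c0 by (simp add: field_simps)
        ultimately have "2 * M / c < u z"
          using ueq[OF zb] ww by (simp add: s_def)
        then have "2 * M < c * u z" using c0 by (simp add: divide_less_eq mult.commute)
        then have "v z < c * u z" using vM[OF z] M by linarith
        then show ?thesis using zb upos[OF zb] by (simp add: divide_less_eq mult.commute)
      qed
    qed
  qed
qed

lemma eigvec_mat: "eigvec_of (mat \<kappa> :: real^'n^'n) (\<chi> i. \<kappa>)"
  unfolding eigvec_of_def
proof
  fix t
  have "det (mat t - mat \<kappa> :: real^'n^'n) = (\<Prod>i\<in>UNIV. (mat t - mat \<kappa> :: real^'n^'n) $ i $ i)"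
    by (rule det_diagonal) (simp add: mat_def)
  then show "det (mat t - mat \<kappa> :: real^'n^'n) = (\<Prod>i\<in>UNIV. t - ((\<chi> i. \<kappa>)::real^'n) $ i)"
    by (simp add: mat_def)
qed

lemma neg_scaleR_mat: "- (c *\<^sub>R mat 1 :: real^'n^'n) = mat (- c)"
  by (simp add: vec_eq_iff mat_def)

lemma deriv_unique_open:
  fixes u \<psi> :: "real^'n \<Rightarrow> real"
  assumes N: "open N" "y \<in> N" and eq: "\<And>z. z \<in> N \<Longrightarrow> u z = \<psi> z"
    and du: "\<And>z. z \<in> N \<Longrightarrow> (u has_derivative (\<lambda>h. Du z \<bullet> h)) (at z)"
    and dp: "\<And>z. z \<in> N \<Longrightarrow> (\<psi> has_derivative (\<lambda>h. Dp z \<bullet> h)) (at z)"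
    and hu: "(Du has_derivative (\<lambda>h. Hu *v h)) (at y)"
    and hp: "(Dp has_derivative (\<lambda>h. Hp *v h)) (at y)"
  shows "Du y = Dp y \<and> Hu = Hp"
proof -
  have D: "Du z = Dp z" if z: "z \<in> N" for z
  proof -
    have "(\<psi> has_derivative (\<lambda>h. Du z \<bullet> h)) (at z)"
      by (rule has_derivative_transform_within_open[OF du[OF z] N(1) z]) (use eq in auto)
    then have "(\<lambda>h. Du z \<bullet> h) = (\<lambda>h. Dp z \<bullet> h)" using dp[OF z] by (rule has_derivative_unique)
    then show ?thesis by (metis vector_eq_rdot)
  qed
  have "(Dp has_derivative (\<lambda>h. Hu *v h)) (at y)"
    by (rule has_derivative_transform_within_open[OF hu N]) (use D in auto)
  then have "(\<lambda>h. Hu *v h) = (\<lambda>h. Hp *v h)" using hp by (rule has_derivative_unique)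
  then have "Hu = Hp" by (metis matrix_eq)
  then show ?thesis using D N(2) by auto
qed

lemma neg_mat: "- (mat c :: real^'n^'n) = mat (- c)"
  by (simp add: vec_eq_iff mat_def)

lemma core:
  fixes f :: "real^'n \<Rightarrow> real" and G :: "(real^'n) set"
    and \<Omega> :: "(real^'n) set" and v :: "real^'n \<Rightarrow> real" and \<alpha> :: real
  assumes n3: "CARD('n) \<ge> 3"
    and st: "structural f G"
    and cc: "canonical_const f G \<alpha>"
    and vpos: "\<forall>x\<in>\<Omega>. v x > 0"
    and vs: "visc_subsol f G \<Omega> v"
    and r: "r > 0" and sub: "cball x r \<subseteq> \<Omega>"
  shows "v x \<le> u_in \<alpha> r x x"
proof -
  define k where "k = (real CARD('n) - 2) / 2"
  have k0: "k > 0" using n3 unfolding k_def by auto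
  define u where "u = u_in \<alpha> r x"
  have al: "\<alpha> > 0" using cc unfolding canonical_const_def by auto
  have "classical_solution f G (ball x r) u"
    using cc r unfolding canonical_const_def u_def by auto
  then obtain Du Hu where upos: "\<And>y. y \<in> ball x r \<Longrightarrow> u y > 0"
    and C2u: "C2_with (ball x r) u Du Hu"
    and solu: "\<And>y lam. y \<in> ball x r \<Longrightarrow> eigvec_of (- conf_hess (u y) (Du y) (Hu y)) lam
                 \<Longrightarrow> lam \<in> closure G \<and> f lam = 1"
    unfolding classical_solution_def by blast
  define a where "a = \<alpha> * r powr k"
  have a0: "a > 0" using al r by (simp add: a_def)
  have ueq: "u y = a * (r^2 - norm (y - x)^2) powr (- k)" if "y \<in> ball x r" for y
  proof -
    have "norm (y - x) < r" using that by (simp add: dist_norm norm_minus_commute)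
    then have "norm (y - x)^2 < r^2" by (simp add: power_strict_mono)
    then show ?thesis using r by (simp add: u_def u_in_eq a_def k_def)
  qed
  have ucont: "isCont u y" if "y \<in> ball x r" for y
    using C2u that unfolding C2_with_def by (meson has_derivative_continuous)
  have uvO: "usc_on \<Omega> v" using vs unfolding visc_subsol_def by auto
  then have uv: "usc_on (cball x r) v" using sub by (rule usc_on_subset)
  have x\<Omega>: "x \<in> \<Omega>" using sub r by auto
  obtain yM where yM: "yM \<in> cball x r" "\<And>z. z \<in> cball x r \<Longrightarrow> v z \<le> v yM"
    using usc_max[OF compact_cball _ uv] r by fastforce
  define M where "M = v yM"
  have M0: "M > 0" using vpos yM sub unfolding M_def by auto
  define h where "h = (\<lambda>y. if y \<in> ball x r then v y / u y else 0)"
  have uh: "usc_on (cball x r) h"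
    unfolding h_def
    by (rule usc_h[OF r k0 a0 M0 uv]) (use yM vpos sub upos ucont ueq in \<open>auto simp: M_def\<close>)
  obtain y0 where y0: "y0 \<in> cball x r" "\<And>z. z \<in> cball x r \<Longrightarrow> h z \<le> h y0"
    using usc_max[OF compact_cball _ uh] r by fastforce
  define m where "m = h y0"
  have xb: "x \<in> ball x r" using r by simp
  have hx: "h x > 0" using vpos x\<Omega> upos[OF xb] xb by (simp add: h_def)
  have m0: "m > 0" using y0(2)[of x] hx r by (simp add: m_def)
  have y0b: "y0 \<in> ball x r"
  proof (rule ccontr)
    assume "y0 \<notin> ball x r"
    then have "m = 0" by (simp add: m_def h_def)
    with m0 show False by simp
  qed
  have vy0: "v y0 = m * u y0" using upos[OF y0b] y0b by (simp add: m_def h_def)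
  have vle: "v y \<le> m * u y" if "y \<in> ball x r" for y
  proof -
    have "v y / u y \<le> m" using y0(2)[of y] that by (simp add: m_def h_def)
    then show ?thesis using upos[OF that] by (simp add: divide_le_eq mult.commute)
  qed
  define t0 where "t0 = norm (y0 - x)^2"
  have t0r: "t0 < r^2" using y0b by (simp add: t0_def dist_norm norm_minus_commute power_strict_mono)
  define t1 where "t1 = (t0 + r^2) / 2"
  have t1: "t1 < r^2" "t0 < t1" using t0r by (auto simp: t1_def)
  define N where "N = {y::real^'n. norm (y - x)^2 < t1}"
  have Nopen: "open N" unfolding N_def by (intro open_Collect_less continuous_intros)
  have y0N: "y0 \<in> N" using t1 by (simp add: N_def t0_def)
  have Nb: "N \<subseteq> ball x r"
  proof
    fix y assume "y \<in> N"
    then have "norm (y - x)^2 < r^2" using t1 by (simp add: N_def)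
    then have "norm (y - x) < r" using r by (meson abs_le_square_iff abs_norm_cancel less_le_not_le not_le order.strict_iff_not power2_less_imp_less)
    then show "y \<in> ball x r" by (simp add: dist_norm norm_minus_commute)
  qed
  obtain \<phi> D\<phi> H\<phi> where C2\<phi>: "C2_with UNIV \<phi> D\<phi> H\<phi>"
    and \<phi>eq: "\<And>y. norm (y - x)^2 < t1 \<Longrightarrow> \<phi> y = m * u_in \<alpha> r x y"
    and \<phi>ch: "\<And>y. norm (y - x)^2 < t1 \<Longrightarrow> conf_hess (\<phi> y) (D\<phi> y) (H\<phi> y) =
        (- 2 * (\<phi> y) powr (- 2 / k) * r^2 / (r^2 - norm (y - x)^2)^2) *\<^sub>R mat 1"
    using ext_fun[OF n3 r m0 al t1(1), of x] unfolding k_def by blast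
  obtain \<psi> D\<psi> H\<psi> where C2\<psi>: "C2_with UNIV \<psi> D\<psi> H\<psi>"
    and \<psi>eq: "\<And>y. norm (y - x)^2 < t1 \<Longrightarrow> \<psi> y = 1 * u_in \<alpha> r x y"
    and \<psi>ch: "\<And>y. norm (y - x)^2 < t1 \<Longrightarrow> conf_hess (\<psi> y) (D\<psi> y) (H\<psi> y) =
        (- 2 * (\<psi> y) powr (- 2 / k) * r^2 / (r^2 - norm (y - x)^2)^2) *\<^sub>R mat 1"
    using ext_fun[OF n3 r zero_less_one al t1(1), of x] unfolding k_def by blast
  have ty0: "norm (y0 - x)^2 < t1" using y0N by (simp add: N_def)
  define q0 where "q0 = r^2 - norm (y0 - x)^2"
  have uni: "Du y0 = D\<psi> y0 \<and> Hu y0 = H\<psi> y0"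
  proof (rule deriv_unique_open[OF Nopen y0N])
    show "u z = \<psi> z" if "z \<in> N" for z using \<psi>eq[of z] that by (simp add: N_def u_def)
    show "(u has_derivative (\<lambda>h. Du z \<bullet> h)) (at z)" if "z \<in> N" for z
      using C2u that Nb unfolding C2_with_def by auto
    show "(\<psi> has_derivative (\<lambda>h. D\<psi> z \<bullet> h)) (at z)" for z
      using C2\<psi> unfolding C2_with_def by auto
    show "(Du has_derivative (\<lambda>h. Hu y0 *v h)) (at y0)"
      using C2u y0b unfolding C2_with_def by auto
    show "(D\<psi> has_derivative (\<lambda>h. H\<psi> y0 *v h)) (at y0)"
      using C2\<psi> unfolding C2_with_def by auto
  qed
  define \<kappa> where "\<kappa> = 2 * (u y0) powr (- 2 / k) * r^2 / q0^2"
  have "- conf_hess (u y0) (Du y0) (Hu y0) = mat \<kappa>"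
    using \<psi>ch[OF ty0] \<psi>eq[OF ty0] uni by (simp add: neg_scaleR_mat neg_mat \<kappa>_def q0_def u_def)
  then have "(\<chi> i. \<kappa>) \<in> closure G \<and> f (\<chi> i. \<kappa>) = 1"
    using solu[OF y0b] eigvec_mat[of \<kappa>] by metis
  then have \<kappa>G: "(\<chi> i. \<kappa>) \<in> G" and f\<kappa>: "f (\<chi> i. \<kappa>) = 1"
    using st unfolding structural_def closure_Un_frontier by auto
  define s where "s = m powr (- 2 / k)"
  have "- conf_hess (\<phi> y0) (D\<phi> y0) (H\<phi> y0) = mat (s * \<kappa>)"
  proof -
    have "\<phi> y0 = m * u y0" using \<phi>eq[OF ty0] by (simp add: u_def)
    then have "(\<phi> y0) powr (- 2 / k) = s * (u y0) powr (- 2 / k)"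
      using m0 upos[OF y0b] by (simp add: s_def powr_mult)
    then show ?thesis using \<phi>ch[OF ty0] by (simp add: neg_scaleR_mat neg_mat \<kappa>_def q0_def mult_ac)
  qed
  moreover have "v y0 = \<phi> y0" using \<phi>eq[OF ty0] vy0 by (simp add: u_def)
  moreover have "\<exists>\<rho>>0. \<forall>y\<in>\<Omega>. dist y y0 < \<rho> \<longrightarrow> v y \<le> \<phi> y"
  proof (intro exI[of _ "sqrt t1 - norm (y0 - x)"] conjI ballI impI)
    have "norm (y0 - x) < sqrt t1" using ty0 by (simp add: real_less_rsqrt)
    then show "sqrt t1 - norm (y0 - x) > 0" by simp
    fix y assume "y \<in> \<Omega>" "dist y y0 < sqrt t1 - norm (y0 - x)"
    then have "norm (y - y0) + norm (y0 - x) < sqrt t1" by (simp add: dist_norm)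
    then have "norm (y - x) < sqrt t1" using norm_triangle_ineq[of "y - y0" "y0 - x"] by simp
    then have "norm (y - x)^2 < t1"
      using real_sqrt_less_iff by (metis norm_ge_zero power2_less_imp_less real_less_rsqrt real_sqrt_abs real_sqrt_less_iff abs_norm_cancel) 
    then have yN: "y \<in> N" by (simp add: N_def)
    then show "v y \<le> \<phi> y" using vle[of y] Nb \<phi>eq[of y] by (auto simp: N_def u_def)
  qed
  moreover have "C2_with \<Omega> \<phi> D\<phi> H\<phi>" using C2\<phi> by (rule C2_with_subset) simp
  ultimately have "f (\<chi> i. s * \<kappa>) \<ge> 1"
    using vs sub y0 eigvec_mat[of "s * \<kappa>"] unfolding visc_subsol_def by (metis subsetD)
  moreover have "(\<chi> i. s * \<kappa>) = s *\<^sub>R (\<chi> i. \<kappa>)" by (simp add: vec_eq_iff)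
  moreover obtain d where d: "d > 0" "\<And>x t. x \<in> G \<Longrightarrow> t > 0 \<Longrightarrow> f (t *\<^sub>R x) = t powr d * f x"
    using st unfolding structural_def by blast
  moreover have s0: "s > 0" using m0 by (simp add: s_def)
  ultimately have sd: "s powr d \<ge> 1" using d(2)[OF \<kappa>G s0] f\<kappa> by (metis mult.right_neutral)
  have m1: "m \<le> 1"
  proof (rule ccontr)
    assume "\<not> m \<le> 1"
    then have "s < 1" using k0 powr_less_mono[of "-2/k" 0 m] by (simp add: s_def)
    then have "s powr d < 1 powr d" using s0 d by (intro powr_less_mono2) auto
    then show False using sd by simp
  qed
  have "v x \<le> m * u x" using vle[OF xb] .
  also have "\<dots> \<le> u x" using m1 upos[OF xb] by (simp add: mult_le_cancel_right1)
  finally show ?thesis by (simp add: u_def)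
qed

theorem lemma3p1:
  fixes f :: "real^'n \<Rightarrow> real" and G :: "(real^'n) set"
    and \<Omega> :: "(real^'n) set" and v :: "real^'n \<Rightarrow> real" and \<alpha> :: real
  assumes "CARD('n) \<ge> 3"
    and "structural f G"
    and "canonical_const f G \<alpha>"
    and "open \<Omega>" and "connected \<Omega>" and "\<Omega> \<noteq> {}"
    and "\<forall>x\<in>\<Omega>. v x > 0"
    and "visc_subsol f G \<Omega> v"
  shows "\<Omega> \<noteq> UNIV \<and>
    (\<forall>x\<in>\<Omega>. infdist x (frontier \<Omega>) powr ((real CARD('n) - 2) / 2) * v x \<le> \<alpha>)"
proof -
  note n3 = assms(1) and st = assms(2) and cc = assms(3) and op = assms(4)
    and vpos = assms(7) and vs = assms(8)
  define k where "k = (real CARD('n) - 2) / 2"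
  have k0: "k > 0" using n3 unfolding k_def by auto
  have al: "\<alpha> > 0" using cc unfolding canonical_const_def by auto
  have bnd: "r \<le> (\<alpha> / v x) powr (1 / k)" if x: "x \<in> \<Omega>" and r: "r > 0" and sub: "cball x r \<subseteq> \<Omega>" for x r
  proof -
    have "v x \<le> u_in \<alpha> r x x" by (rule core[OF n3 st cc vpos vs r sub])
    also have "u_in \<alpha> r x x = \<alpha> * r powr (- k)"
      using r by (simp add: u_in_def k_def power2_eq_square powr_minus_divide powr_divide)
    finally have "v x \<le> \<alpha> * r powr (- k)" .
    then have "r powr k \<le> \<alpha> / v x" using vpos x r
      by (simp add: powr_minus field_simps)
    then have "(r powr k) powr (1 / k) \<le> (\<alpha> / v x) powr (1 / k)"
      using r k0 by (intro powr_mono2) auto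
    then show ?thesis using r k0 by (simp add: powr_powr)
  qed
  have nU: "\<Omega> \<noteq> UNIV"
  proof
    assume U: "\<Omega> = UNIV"
    obtain x where x: "x \<in> \<Omega>" using assms(6) by auto
    define B where "B = (\<alpha> / v x) powr (1 / k)"
    have "B + 1 \<le> B" unfolding B_def by (rule bnd[OF x]) (use U in \<open>auto intro: add_nonneg_pos[OF powr_ge_zero]\<close>)
    then show False by simp
  qed
  have "infdist x (frontier \<Omega>) powr k * v x \<le> \<alpha>" if x: "x \<in> \<Omega>" for x
  proof -
    define d where "d = infdist x (frontier \<Omega>)"
    define B where "B = (\<alpha> / v x) powr (1 / k)"
    have vx: "v x > 0" using vpos x by auto
    show ?thesis
    proof (cases "d > 0")
      case False
      then have "d = 0" using infdist_nonneg[of x "frontier \<Omega>"] by (simp add: d_def)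
      then show ?thesis using al by (simp add: d_def)
    next
      case True
      have sub: "cball x r \<subseteq> \<Omega>" if "r < d" for r
      proof
        fix y assume y: "y \<in> cball x r"
        show "y \<in> \<Omega>"
        proof (rule ccontr)
          assume yn: "y \<notin> \<Omega>"
          have "closed_segment x y \<inter> frontier \<Omega> \<noteq> {}"
            by (rule connected_Int_frontier) (use x yn in auto)
          then obtain w where w: "w \<in> closed_segment x y" "w \<in> frontier \<Omega>" by auto
          have "dist w x \<le> dist x y" using dist_in_closed_segment[OF w(1)] by simp
          moreover have "d \<le> dist x w" unfolding d_def by (rule infdist_le[OF w(2)])
          ultimately show False using y that by (simp add: dist_commute)
        qed
      qed
      have dB: "d \<le> B"
      proof (rule ccontr)
        assume "\<not> d \<le> B"
        define r where "r = (max B 0 + d) / 2"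
        have "r > 0" "r < d" "B < r" using True \<open>\<not> d \<le> B\<close> by (auto simp: r_def)
        then show False using bnd[OF x \<open>r > 0\<close> sub[OF \<open>r < d\<close>]] by (simp add: B_def)
      qed
      have "d powr k \<le> B powr k" using dB True k0 by (intro powr_mono2) auto
      also have "B powr k = \<alpha> / v x" using al vx k0 by (simp add: B_def powr_powr)
      finally show ?thesis using vx by (simp add: d_def field_simps)
    qed
  qed
  then show ?thesis using nU by (simp add: k_def)
qed

end
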